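(* Let $k\ge1$, let $f:[-k,k]^2\to[n]^2$ be injective and $W\subset[-k,k]^2$. Let $w(f_{|W})$ be the total number of edges (constraints, counted with multiplicity) of the constraint graph $G(f_{|W})$, and let $u(f_{|W})$ be the number of these edges containing a vertex of $G(f_{|W})$ that appears in only one constraint (i.e. has degree $1$ in $G(f_{|W})$). Then $$\gamma(f_{|W})\ge u(f_{|W})+\tfrac12\big(w(f_{|W})-u(f_{|W})\big)=\tfrac12 w(f_{|W})+\tfrac12 u(f_{|W}).$$
   Context: Every vertex $x\in[n]^2$ has four incident edges $\uparrow(x),\downarrow(x),\rightarrow(x),\leftarrow(x)$, where $\rightarrow(i,j)=\leftarrow(i+1,j)$ is the edge between $(i,j)$ and $(i+1,j)$ and $\uparrow(i,j)=\downarrow(i,j+1)$ is the edge between $(i,j)$ and $(i,j+1)$; for boundary vertices the edges leading out of $[n]^2$ are included. The constraint graph $G(f_{|W})=(V,E)$ is the multigraph whose vertices are grid edges and whose edge multiset $E$ consists of the pair $(\rightarrow(f(u)),\leftarrow(f(u+(1,0))))$ for each $u$ with $u,u+(1,0)\in W$ and $f(u+(1,0))\neq f(u)+(1,0)$, and the pair $(\uparrow(f(u)),\downarrow(f(u+(0,1))))$ for each $u$ with $u,u+(0,1)\in W$ and $f(u+(0,1))\ne f(u)+(0,1)$; $V$ is the set of grid edges appearing in some pair of $E$. With $c(f_{|W})$ the number of connected components of $G(f_{|W})$, $\gamma(f_{|W})=|V|-c(f_{|W})$. *)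

theory Defs
  imports Complex_Main "HOL-Library.Multiset"
begin

type_synonym pt = "int \<times> int"

text \<open>Grid edges of the square grid Z^2: Hor i j is the edge between (i,j) and (i+1,j);
Ver i j is the edge between (i,j) and (i,j+1). Boundary edges leading out of [n]^2 are
thus included automatically.\<close>
datatype gedge = Hor int int | Ver int int

fun eR :: "pt \<Rightarrow> gedge" where "eR (i, j) = Hor i j"
fun eL :: "pt \<Rightarrow> gedge" where "eL (i, j) = Hor (i - 1) j"
fun eU :: "pt \<Rightarrow> gedge" where "eU (i, j) = Ver i j"
fun eD :: "pt \<Rightarrow> gedge" where "eD (i, j) = Ver i (j - 1)"

definition grid :: "nat \<Rightarrow> pt set" where
  "grid n = {1..int n} \<times> {1..int n}"

definition box :: "nat \<Rightarrow> pt set" where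
  "box k = {-int k..int k} \<times> {-int k..int k}"

definition e1 :: pt where "e1 = (1, 0)"
definition e2 :: pt where "e2 = (0, 1)"

fun padd :: "pt \<Rightarrow> pt \<Rightarrow> pt" where "padd (a, b) (c, d) = (a + c, b + d)"

text \<open>Constraint indices: (u, False) is the horizontal constraint at u, (u, True) the
vertical one. The edge multiset E of G(f|W) is the image of this index set under cends.\<close>
definition constr_idx :: "(pt \<Rightarrow> pt) \<Rightarrow> pt set \<Rightarrow> (pt \<times> bool) set" where
  "constr_idx f W =
     {(u, False) | u. u \<in> W \<and> padd u e1 \<in> W \<and> f (padd u e1) \<noteq> padd (f u) e1}
   \<union> {(u, True) | u. u \<in> W \<and> padd u e2 \<in> W \<and> f (padd u e2) \<noteq> padd (f u) e2}"

fun cends :: "(pt \<Rightarrow> pt) \<Rightarrow> pt \<times> bool \<Rightarrow> gedge \<times> gedge" where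
  "cends f (u, False) = (eR (f u), eL (f (padd u e1)))"
| "cends f (u, True) = (eU (f u), eD (f (padd u e2)))"

definition cedges :: "(pt \<Rightarrow> pt) \<Rightarrow> pt set \<Rightarrow> (gedge \<times> gedge) multiset" where
  "cedges f W = image_mset (cends f) (mset_set (constr_idx f W))"

definition cverts :: "(pt \<Rightarrow> pt) \<Rightarrow> pt set \<Rightarrow> gedge set" where
  "cverts f W = (\<Union>p \<in> set_mset (cedges f W). {fst p, snd p})"

definition cconn :: "(pt \<Rightarrow> pt) \<Rightarrow> pt set \<Rightarrow> gedge rel" where
  "cconn f W = (let A = set_mset (cedges f W) in (A \<union> A\<inverse>)\<^sup>*)"

definition ncomp :: "(pt \<Rightarrow> pt) \<Rightarrow> pt set \<Rightarrow> nat" where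
  "ncomp f W = card (cverts f W // (cconn f W \<inter> (cverts f W \<times> cverts f W)))"

definition gamma :: "(pt \<Rightarrow> pt) \<Rightarrow> pt set \<Rightarrow> int" where
  "gamma f W = int (card (cverts f W)) - int (ncomp f W)"

definition wcount :: "(pt \<Rightarrow> pt) \<Rightarrow> pt set \<Rightarrow> nat" where
  "wcount f W = size (cedges f W)"

definition cdeg :: "(pt \<Rightarrow> pt) \<Rightarrow> pt set \<Rightarrow> gedge \<Rightarrow> nat" where
  "cdeg f W v = size (filter_mset (\<lambda>p. v = fst p \<or> v = snd p) (cedges f W))"

definition ucount :: "(pt \<Rightarrow> pt) \<Rightarrow> pt set \<Rightarrow> nat" where
  "ucount f W = size (filter_mset (\<lambda>p. cdeg f W (fst p) = 1 \<or> cdeg f W (snd p) = 1) (cedges f W))"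

end

theory Submission
  imports Defs
begin

lemma card_filter_sum: "finite A \<Longrightarrow> real (card {x\<in>A. P x}) = (\<Sum>x\<in>A. if P x then 1 else 0)"
  by (simp add: sum.inter_filter[symmetric])

lemma dc:
  fixes E :: "('a \<times> 'a) set" and g :: "'a \<Rightarrow> real"
  assumes fin: "finite E" and noloop: "\<forall>p\<in>E. fst p \<noteq> snd p"
  shows "(\<Sum>v\<in>(\<Union>p\<in>E. {fst p, snd p}). g v * real (card {p\<in>E. v = fst p \<or> v = snd p}))
       = (\<Sum>p\<in>E. g (fst p) + g (snd p))"
proof -
  let ?V = "\<Union>p\<in>E. {fst p, snd p}"
  have fV: "finite ?V" using fin by auto
  have "(\<Sum>v\<in>?V. g v * real (card {p\<in>E. v = fst p \<or> v = snd p}))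
      = (\<Sum>v\<in>?V. \<Sum>p\<in>E. if v = fst p \<or> v = snd p then g v else 0)"
    by (simp add: card_filter_sum[OF fin] sum_distrib_left if_distrib cong: if_cong)
  also have "\<dots> = (\<Sum>p\<in>E. \<Sum>v\<in>?V. if v = fst p \<or> v = snd p then g v else 0)"
    by (rule sum.swap)
  also have "\<dots> = (\<Sum>p\<in>E. g (fst p) + g (snd p))"
  proof (rule sum.cong[OF refl])
    fix p assume p: "p \<in> E"
    have "(\<Sum>v\<in>?V. if v = fst p \<or> v = snd p then g v else 0) = sum g {v\<in>?V. v = fst p \<or> v = snd p}"
      by (rule sum.inter_filter[symmetric, OF fV])
    also have "{v\<in>?V. v = fst p \<or> v = snd p} = {fst p, snd p}" using p by auto
    also have "sum g {fst p, snd p} = g (fst p) + g (snd p)" using p noloop by auto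
    finally show "(\<Sum>v\<in>?V. if v = fst p \<or> v = snd p then g v else 0) = g (fst p) + g (snd p)" .
  qed
  finally show ?thesis .
qed

lemma absgraph:
  fixes E :: "('a \<times> 'a) set"
  assumes fin: "finite E" and noloop: "\<forall>p\<in>E. fst p \<noteq> snd p"
    and deg2: "\<And>v. card {p\<in>E. v = fst p \<or> v = snd p} \<le> 2"
  defines "V \<equiv> (\<Union>p\<in>E. {fst p, snd p})"
    and "deg \<equiv> \<lambda>v. card {p\<in>E. v = fst p \<or> v = snd p}"
    and "R \<equiv> (E \<union> E\<inverse>)\<^sup>* \<inter> (\<Union>p\<in>E. {fst p, snd p}) \<times> (\<Union>p\<in>E. {fst p, snd p})"
  shows "real (card E) + real (card {p\<in>E. deg (fst p) = 1 \<or> deg (snd p) = 1})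
          \<le> 2 * real (card V) - 2 * real (card (V // R))"
proof -
  define ind :: "bool \<Rightarrow> real" where "ind b = (if b then 1 else 0)" for b
  define d where "d = card {p\<in>E. deg (fst p) = 1 \<and> deg (snd p) = 1}"
  define U where "U = card {p\<in>E. deg (fst p) = 1 \<or> deg (snd p) = 1}"
  have RV: "R = (E \<union> E\<inverse>)\<^sup>* \<inter> V \<times> V" unfolding R_def V_def ..
  have fV: "finite V" using fin unfolding V_def by auto
  have deg1: "deg v \<ge> 1" if "v \<in> V" for v
  proof -
    from that obtain p where "p \<in> E" "v = fst p \<or> v = snd p" unfolding V_def by auto
    then have "{p\<in>E. v = fst p \<or> v = snd p} \<noteq> {}" by blast
    then show ?thesis unfolding deg_def using fin
      by (simp add: Suc_le_eq card_gt_0_iff)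
  qed
  have degs: "deg v = 1 \<or> deg v = 2" if "v \<in> V" for v
    using deg1[OF that] deg2[of v] unfolding deg_def by linarith
  have S1: "(\<Sum>v\<in>V. real (deg v)) = 2 * real (card E)"
    using dc[OF fin noloop, of "\<lambda>_. 1"] unfolding V_def deg_def by simp
  have S2: "(\<Sum>v\<in>V. ind (deg v = 1) * real (deg v)) = (\<Sum>p\<in>E. ind (deg (fst p) = 1) + ind (deg (snd p) = 1))"
    using dc[OF fin noloop, of "\<lambda>v. ind (deg v = 1)"] unfolding V_def deg_def by simp
  have S3: "real U + real d = (\<Sum>p\<in>E. ind (deg (fst p) = 1) + ind (deg (snd p) = 1))"
    unfolding U_def d_def card_filter_sum[OF fin] sum.distrib[symmetric]
    by (rule sum.cong) (auto simp: ind_def)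
  have "real (card V) = (\<Sum>v\<in>V. real (deg v) / 2 + ind (deg v = 1) * real (deg v) / 2)"
  proof -
    have "real (card V) = (\<Sum>v\<in>V. 1)" by simp
    also have "\<dots> = (\<Sum>v\<in>V. real (deg v) / 2 + ind (deg v = 1) * real (deg v) / 2)"
      by (rule sum.cong[OF refl]) (use degs in \<open>auto simp: ind_def\<close>)
    finally show ?thesis .
  qed
  also have "\<dots> = real (card E) + (real U + real d) / 2"
    unfolding sum.distrib S3 sum_divide_distrib[symmetric] S1 S2 by simp
  finally have VV: "real (card V) = real (card E) + (real U + real d) / 2" .
  have eqv: "equiv V R"
  proof -
    have "sym ((E \<union> E\<inverse>)\<^sup>*)" by (simp add: sym_Un_converse sym_rtrancl)
    then show ?thesis unfolding RV equiv_def refl_on_def sym_def trans_def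
      by (auto intro: rtrancl_trans)
  qed
  define cls :: "'a \<times> 'a \<Rightarrow> 'a set" where "cls p = R `` {fst p}" for p
  define h :: "'a \<times> 'a \<Rightarrow> real" where "h p = 1 + ind (deg (fst p) = 1 \<and> deg (snd p) = 1)" for p
  have fQ: "finite (V // R)" using fV by (rule finite_quotient) (simp add: RV)
  have clsQ: "cls ` E \<subseteq> V // R"
    unfolding cls_def V_def by (auto intro!: quotientI)
  have grp: "(\<Sum>C\<in>V//R. sum h {p. p \<in> E \<and> cls p = C}) = sum h E"
    by (rule sum.group[OF fin fQ clsQ])
  have hge: "h p \<ge> 1" for p unfolding h_def ind_def by auto
  have conn: "(a, b) \<in> R" if "p \<in> E" "a \<in> {fst p, snd p}" "b \<in> {fst p, snd p}" for a b p
  proof -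
    have "(fst p, snd p) \<in> (E \<union> E\<inverse>)\<^sup>*" using that(1) by (auto intro: r_into_rtrancl)
    moreover have "(snd p, fst p) \<in> (E \<union> E\<inverse>)\<^sup>*" using that(1) by (auto intro: r_into_rtrancl)
    moreover have "a \<in> V" "b \<in> V" using that unfolding V_def by auto
    ultimately show ?thesis using that unfolding RV by auto
  qed
  have percls: "sum h {p. p \<in> E \<and> cls p = C} \<ge> 2" if C: "C \<in> V // R" for C
  proof -
    from C obtain v where v: "v \<in> V" "C = R `` {v}" by (auto elim: quotientE)
    from v obtain p0 where p0: "p0 \<in> E" "v = fst p0 \<or> v = snd p0" unfolding V_def by auto
    have "(fst p0, v) \<in> R" using conn[OF p0(1)] p0(2) by auto
    then have c0: "cls p0 = C" unfolding cls_def v(2) using eqv by (simp add: equiv_class_eq)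
    let ?EC = "{p. p \<in> E \<and> cls p = C}"
    have fEC: "finite ?EC" using fin by auto
    have p0in: "p0 \<in> ?EC" using p0 c0 by auto
    show ?thesis
    proof (cases "\<exists>q\<in>?EC. q \<noteq> p0")
      case True
      then obtain q where q: "q \<in> ?EC" "q \<noteq> p0" by blast
      have "sum h {p0, q} \<le> sum h ?EC"
        using p0in q fEC hge by (intro sum_mono2) (auto intro: order_trans[OF zero_le_one])
      moreover have "sum h {p0, q} = h p0 + h q" using q by simp
      ultimately show ?thesis using hge[of p0] hge[of q] by linarith
    next
      case False
      then have EC: "?EC = {p0}" using p0in by blast
      have only: "q = p0" if "q \<in> E" "x \<in> {fst q, snd q}" "x \<in> {fst p0, snd p0}" for q x
      proof -
        have "(fst p0, x) \<in> R" using conn[OF p0(1), of "fst p0" x] that(3) by auto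
        moreover have "(x, fst q) \<in> R" using conn[OF that(1), of x "fst q"] that(2) by auto
        ultimately have "(fst p0, fst q) \<in> R" using eqv unfolding equiv_def trans_def by blast
        then have "cls q = cls p0" unfolding cls_def using eqv by (simp add: equiv_class_eq)
        then have "q \<in> ?EC" using that(1) c0 by auto
        then show ?thesis using EC by auto
      qed
      have "{p\<in>E. fst p0 = fst p \<or> fst p0 = snd p} = {p0}" using only p0(1) by auto
      moreover have "{p\<in>E. snd p0 = fst p \<or> snd p0 = snd p} = {p0}" using only p0(1) by auto
      ultimately have "h p0 = 2" unfolding h_def deg_def ind_def by simp
      then show ?thesis using EC by simp
    qed
  qed
  have "2 * real (card (V // R)) = (\<Sum>C\<in>V//R. 2)" by simp
  also have "\<dots> \<le> (\<Sum>C\<in>V//R. sum h {p. p \<in> E \<and> cls p = C})" by (rule sum_mono) (rule percls)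
  also have "\<dots> = sum h E" by (rule grp)
  also have "\<dots> = real (card E) + real d"
    unfolding h_def sum.distrib d_def card_filter_sum[OF fin] by (simp add: ind_def)
  finally have "2 * real (card (V // R)) \<le> real (card E) + real d" .
  then show ?thesis using VV unfolding U_def by argo
qed


lemma eR_inj: "eR a = eR b \<Longrightarrow> a = b" by (cases a; cases b) auto
lemma eL_inj: "eL a = eL b \<Longrightarrow> a = b" by (cases a; cases b) auto
lemma eU_inj: "eU a = eU b \<Longrightarrow> a = b" by (cases a; cases b) auto
lemma eD_inj: "eD a = eD b \<Longrightarrow> a = b" by (cases a; cases b) auto

lemma padd_e1_inj: "padd u e1 = padd v e1 \<Longrightarrow> u = v" by (cases u; cases v) (auto simp: e1_def)
lemma padd_e2_inj: "padd u e2 = padd v e2 \<Longrightarrow> u = v" by (cases u; cases v) (auto simp: e2_def)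

lemma finite_box: "finite (box k)" unfolding box_def by auto

theorem proposition3p5:
  fixes k n :: nat and f :: "int \<times> int \<Rightarrow> int \<times> int" and W :: "(int \<times> int) set"
  assumes "k \<ge> 1"
    and "f ` box k \<subseteq> grid n"
    and "inj_on f (box k)"
    and "W \<subseteq> box k"
  shows "real_of_int (gamma f W) \<ge> real (ucount f W) + (real (wcount f W) - real (ucount f W)) / 2
       \<and> real (ucount f W) + (real (wcount f W) - real (ucount f W)) / 2
         = real (wcount f W) / 2 + real (ucount f W) / 2"
proof -
  note inj = assms(3) and WB = assms(4)
  define I where "I = constr_idx f W"
  define E where "E = cends f ` I"
  have injW: "f a = f b \<Longrightarrow> a \<in> W \<Longrightarrow> b \<in> W \<Longrightarrow> a = b" for a b
    using inj WB by (meson inj_onD subsetD)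
  have fI: "finite I"
  proof -
    have "I \<subseteq> W \<times> UNIV" unfolding I_def constr_idx_def by auto
    moreover have "finite (W \<times> (UNIV :: bool set))"
      using finite_subset[OF WB finite_box] by simp
    ultimately show ?thesis by (rule finite_subset)
  qed
  have Imem: "u \<in> W \<and> padd u e1 \<in> W \<and> f (padd u e1) \<noteq> padd (f u) e1" if "(u, False) \<in> I" for u
    using that unfolding I_def constr_idx_def by auto
  have Imem2: "u \<in> W \<and> padd u e2 \<in> W \<and> f (padd u e2) \<noteq> padd (f u) e2" if "(u, True) \<in> I" for u
    using that unfolding I_def constr_idx_def by auto
  have fstinj: "x = y" if "x \<in> I" "y \<in> I" "fst (cends f x) = fst (cends f y)" for x y
  proof -
    obtain u b where x: "x = (u, b)" by (cases x)
    obtain u' b' where y: "y = (u', b')" by (cases y)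
    show ?thesis
    proof (cases b; cases b')
      assume bb: "b" "b'"
      have "eU (f u) = eU (f u')" using that(3) x y bb by simp
      hence "f u = f u'" by (rule eU_inj)
      moreover have "u \<in> W" "u' \<in> W" using Imem2 that(1,2) x y bb by auto
      ultimately have "u = u'" by (rule injW)
      then show ?thesis using x y bb by simp
    next
      assume bb: "\<not> b" "\<not> b'"
      have "eR (f u) = eR (f u')" using that(3) x y bb by simp
      hence "f u = f u'" by (rule eR_inj)
      moreover have "u \<in> W" "u' \<in> W" using Imem that(1,2) x y bb by auto
      ultimately have "u = u'" by (rule injW)
      then show ?thesis using x y bb by simp
    next
      assume bb: "b" "\<not> b'"
      have "eU (f u) = eR (f u')" using that(3) x y bb by simp
      then show ?thesis by (cases "f u"; cases "f u'") simp
    next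
      assume bb: "\<not> b" "b'"
      have "eR (f u) = eU (f u')" using that(3) x y bb by simp
      then show ?thesis by (cases "f u"; cases "f u'") simp
    qed
  qed
  have sndinj: "x = y" if "x \<in> I" "y \<in> I" "snd (cends f x) = snd (cends f y)" for x y
  proof -
    obtain u b where x: "x = (u, b)" by (cases x)
    obtain u' b' where y: "y = (u', b')" by (cases y)
    show ?thesis
    proof (cases b; cases b')
      assume bb: "b" "b'"
      have "eD (f (padd u e2)) = eD (f (padd u' e2))" using that(3) x y bb by simp
      hence "f (padd u e2) = f (padd u' e2)" by (rule eD_inj)
      moreover have "padd u e2 \<in> W" "padd u' e2 \<in> W" using Imem2 that(1,2) x y bb by auto
      ultimately have "padd u e2 = padd u' e2" by (rule injW)
      then have "u = u'" by (rule padd_e2_inj)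
      then show ?thesis using x y bb by simp
    next
      assume bb: "\<not> b" "\<not> b'"
      have "eL (f (padd u e1)) = eL (f (padd u' e1))" using that(3) x y bb by simp
      hence "f (padd u e1) = f (padd u' e1)" by (rule eL_inj)
      moreover have "padd u e1 \<in> W" "padd u' e1 \<in> W" using Imem that(1,2) x y bb by auto
      ultimately have "padd u e1 = padd u' e1" by (rule injW)
      then have "u = u'" by (rule padd_e1_inj)
      then show ?thesis using x y bb by simp
    next
      assume bb: "b" "\<not> b'"
      have "eD (f (padd u e2)) = eL (f (padd u' e1))" using that(3) x y bb by simp
      then show ?thesis by (cases "f (padd u e2)"; cases "f (padd u' e1)") simp
    next
      assume bb: "\<not> b" "b'"
      have "eL (f (padd u e1)) = eD (f (padd u' e2))" using that(3) x y bb by simp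
      then show ?thesis by (cases "f (padd u e1)"; cases "f (padd u' e2)") simp
    qed
  qed
  have injc: "inj_on (cends f) I" by (rule inj_onI) (use fstinj in auto)
  have fE: "finite E" unfolding E_def using fI by simp
  have ced: "cedges f W = mset_set E"
    unfolding cedges_def E_def I_def[symmetric] by (rule image_mset_mset_set[OF injc])
  have sE: "set_mset (cedges f W) = E" using ced fE by simp
  have noloop: "\<forall>p\<in>E. fst p \<noteq> snd p"
  proof
    fix p assume "p \<in> E"
    then obtain u b where ub: "(u, b) \<in> I" "p = cends f (u, b)" unfolding E_def by auto
    show "fst p \<noteq> snd p"
    proof (cases b)
      case True
      then have m: "f (padd u e2) \<noteq> padd (f u) e2" using Imem2 ub by auto
      show ?thesis using ub True m
        by (cases "f u"; cases "f (padd u e2)") (auto simp: e2_def)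
    next
      case False
      then have m: "f (padd u e1) \<noteq> padd (f u) e1" using Imem ub by auto
      show ?thesis using ub False m
        by (cases "f u"; cases "f (padd u e1)") (auto simp: e1_def)
    qed
  qed
  have deg2: "card {p\<in>E. v = fst p \<or> v = snd p} \<le> 2" for v
  proof -
    let ?A = "{x\<in>I. fst (cends f x) = v}" and ?B = "{x\<in>I. snd (cends f x) = v}"
    have "{p\<in>E. v = fst p \<or> v = snd p} = cends f ` (?A \<union> ?B)" unfolding E_def by auto
    then have "card {p\<in>E. v = fst p \<or> v = snd p} \<le> card (?A \<union> ?B)"
      by (simp add: card_image_le fI)
    also have "\<dots> \<le> card ?A + card ?B" by (rule card_Un_le)
    also have "card ?A \<le> Suc 0"
    proof (subst card_le_Suc0_iff_eq)
      show "finite ?A" using fI by simp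
      show "\<forall>a1\<in>?A. \<forall>a2\<in>?A. a1 = a2" using fstinj by blast
    qed
    also have "card ?B \<le> Suc 0"
    proof (subst card_le_Suc0_iff_eq)
      show "finite ?B" using fI by simp
      show "\<forall>a1\<in>?B. \<forall>a2\<in>?B. a1 = a2" using sndinj by blast
    qed
    finally show ?thesis by simp
  qed
  have cdeq: "cdeg f W v = card {p\<in>E. v = fst p \<or> v = snd p}" for v
    unfolding cdeg_def ced using fE by simp
  have wc: "wcount f W = card E" unfolding wcount_def ced using fE by simp
  have uc: "ucount f W = card {p\<in>E. card {q\<in>E. fst p = fst q \<or> fst p = snd q} = 1
                                 \<or> card {q\<in>E. snd p = fst q \<or> snd p = snd q} = 1}"
    unfolding ucount_def ced cdeq using fE by simp
  have cv: "cverts f W = (\<Union>p\<in>E. {fst p, snd p})" unfolding cverts_def sE ..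
  have cc: "cconn f W = (E \<union> E\<inverse>)\<^sup>*" unfolding cconn_def sE Let_def ..
  have ga: "real_of_int (gamma f W) = real (card (cverts f W)) - real (ncomp f W)"
    unfolding gamma_def by simp
  note main = absgraph[OF fE noloop deg2]
  have "real (wcount f W) + real (ucount f W) \<le> 2 * real_of_int (gamma f W)"
    using main unfolding wc uc ga ncomp_def cv cc by simp
  then show ?thesis by argo
qed

end
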